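(* Let $(\Omega,\mathcal{F})$ be a measurable space, $\mathrm{B}_b$ the space of bounded real-valued measurable functions, $C\subset\mathrm{B}_b$ a linear subspace containing the constants, and $H\colon C\to\mathbb{R}$ a sublinear premium principle, i.e. a convex premium principle with $H(\lambda X)=\lambda H(X)$ for all $X\in C$, $\lambda>0$. Then $R_{\mathrm{Max}}(X):=\inf\{H(X_0)\mid X_0\in C,\ X_0\ge X\}$ is a coherent risk measure given by $$R_{\mathrm{Max}}(X)=\max_{\mathbb{P}\in\mathcal{P}}\mathbb{E}_{\mathbb{P}}(X)\quad\text{for all }X\in\mathrm{B}_b,$$ where $\mathcal{P}=\{\mathbb{P}\in\mathrm{ba}_+^1\mid \mathbb{E}_{\mathbb{P}}(X)\le H(X)\text{ for all }X\in C\}$.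
   Context: A premium principle is a map $H\colon C\to\mathbb{R}$ with $H(X+m)=H(X)+m$ for $X\in C$, $m\in\mathbb{R}$, $H(0)=0$, and $H(X)\ge0$ for $X\in C$ with $X\ge0$ (pointwise order). Convex means $H(\lambda X+(1-\lambda)Y)\le\lambda H(X)+(1-\lambda)H(Y)$ for $\lambda\in[0,1]$. $\mathrm{ba}_+^1$ is the set of finitely additive probability measures on $(\Omega,\mathcal{F})$ and $\mathbb{E}_{\mathbb{P}}$ the associated integral. *)

theory Defs
  imports "HOL-Probability.Probability"
begin

definition Bb :: "'a measure \<Rightarrow> ('a \<Rightarrow> real) set" where
  "Bb M = {X. X \<in> borel_measurable M \<and> bounded (X ` space M)}"

text \<open>Finitely additive probability measures (ba_+^1) on (space M, sets M),
  represented as set functions vanishing outside sets M.\<close>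
definition ba1 :: "'a measure \<Rightarrow> ('a set \<Rightarrow> real) set" where
  "ba1 M = {P. (\<forall>A\<in>sets M. 0 \<le> P A) \<and> P (space M) = 1
     \<and> (\<forall>A\<in>sets M. \<forall>B\<in>sets M. A \<inter> B = {} \<longrightarrow> P (A \<union> B) = P A + P B)
     \<and> (\<forall>A. A \<notin> sets M \<longrightarrow> P A = 0)}"

definition simple_fn :: "'a measure \<Rightarrow> ('a \<Rightarrow> real) \<Rightarrow> bool" where
  "simple_fn M s \<longleftrightarrow> s \<in> borel_measurable M \<and> finite (s ` space M)"

definition simple_int :: "'a measure \<Rightarrow> ('a set \<Rightarrow> real) \<Rightarrow> ('a \<Rightarrow> real) \<Rightarrow> real" where
  "simple_int M P s = (\<Sum>y\<in>s ` space M. y * P (s -` {y} \<inter> space M))"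

definition fa_expect :: "'a measure \<Rightarrow> ('a set \<Rightarrow> real) \<Rightarrow> ('a \<Rightarrow> real) \<Rightarrow> real" where
  "fa_expect M P X = Sup {simple_int M P s | s. simple_fn M s \<and> (\<forall>\<omega>\<in>space M. s \<omega> \<le> X \<omega>)}"

definition premium_principle :: "'a measure \<Rightarrow> ('a \<Rightarrow> real) set \<Rightarrow> (('a \<Rightarrow> real) \<Rightarrow> real) \<Rightarrow> bool" where
  "premium_principle M C H \<longleftrightarrow>
     (\<forall>X\<in>C. \<forall>m::real. H (\<lambda>\<omega>. X \<omega> + m) = H X + m) \<and> H (\<lambda>\<omega>. 0) = 0 \<and>
     (\<forall>X\<in>C. (\<forall>\<omega>\<in>space M. 0 \<le> X \<omega>) \<longrightarrow> 0 \<le> H X)"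

definition convex_on_C :: "('a \<Rightarrow> real) set \<Rightarrow> (('a \<Rightarrow> real) \<Rightarrow> real) \<Rightarrow> bool" where
  "convex_on_C C H \<longleftrightarrow> (\<forall>X\<in>C. \<forall>Y\<in>C. \<forall>l::real. 0 \<le> l \<and> l \<le> 1 \<longrightarrow>
      H (\<lambda>\<omega>. l * X \<omega> + (1 - l) * Y \<omega>) \<le> l * H X + (1 - l) * H Y)"

definition sublinear_premium_principle :: "'a measure \<Rightarrow> ('a \<Rightarrow> real) set \<Rightarrow> (('a \<Rightarrow> real) \<Rightarrow> real) \<Rightarrow> bool" where
  "sublinear_premium_principle M C H \<longleftrightarrow> premium_principle M C H \<and> convex_on_C C H \<and>
     (\<forall>X\<in>C. \<forall>l::real. 0 < l \<longrightarrow> H (\<lambda>\<omega>. l * X \<omega>) = l * H X)"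

text \<open>Coherent risk measure on Bb M (loss convention): monotone, cash additive,
  positively homogeneous, subadditive.\<close>
definition coherent_risk_measure :: "'a measure \<Rightarrow> (('a \<Rightarrow> real) \<Rightarrow> real) \<Rightarrow> bool" where
  "coherent_risk_measure M R \<longleftrightarrow>
     (\<forall>X\<in>Bb M. \<forall>Y\<in>Bb M. (\<forall>\<omega>\<in>space M. X \<omega> \<le> Y \<omega>) \<longrightarrow> R X \<le> R Y) \<and>
     (\<forall>X\<in>Bb M. \<forall>m::real. R (\<lambda>\<omega>. X \<omega> + m) = R X + m) \<and>
     (\<forall>X\<in>Bb M. \<forall>l::real. 0 < l \<longrightarrow> R (\<lambda>\<omega>. l * X \<omega>) = l * R X) \<and>
     (\<forall>X\<in>Bb M. \<forall>Y\<in>Bb M. R (\<lambda>\<omega>. X \<omega> + Y \<omega>) \<le> R X + R Y)"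

end

theory Submission
  imports Defs
begin

definition hb_ok :: "('a \<Rightarrow> real) set \<Rightarrow> (('a \<Rightarrow> real) \<Rightarrow> real) \<Rightarrow> ('a \<Rightarrow> real) \<Rightarrow> (('a \<Rightarrow> real) \<times> real) set \<Rightarrow> bool" where
  "hb_ok V p x0 G \<longleftrightarrow> (\<forall>x a b. (x,a)\<in>G \<longrightarrow> (x,b)\<in>G \<longrightarrow> a = b) \<and> (x0, p x0) \<in> G \<and>
     (\<forall>x a y b. (x,a)\<in>G \<longrightarrow> (y,b)\<in>G \<longrightarrow> ((\<lambda>\<omega>. x \<omega> + y \<omega>), a + b) \<in> G) \<and>
     (\<forall>x a c. (x,a)\<in>G \<longrightarrow> ((\<lambda>\<omega>. c * x \<omega>), c * a) \<in> G) \<and>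
     (\<forall>x a. (x,a)\<in>G \<longrightarrow> x \<in> V \<and> a \<le> p x)"

lemma hb_okD:
  assumes "hb_ok V p x0 G"
  shows "\<And>x a b. (x,a)\<in>G \<Longrightarrow> (x,b)\<in>G \<Longrightarrow> a = b" and "(x0, p x0) \<in> G"
    and "\<And>x a z b. (x,a)\<in>G \<Longrightarrow> (z,b)\<in>G \<Longrightarrow> ((\<lambda>\<omega>. x \<omega> + z \<omega>), a + b) \<in> G"
    and "\<And>x a c. (x,a)\<in>G \<Longrightarrow> ((\<lambda>\<omega>. c * x \<omega>), c * a) \<in> G"
    and "\<And>x a. (x,a)\<in>G \<Longrightarrow> x \<in> V" and "\<And>x a. (x,a)\<in>G \<Longrightarrow> a \<le> p x"
  using assms unfolding hb_ok_def by blast+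

lemma hb_extend:
  fixes V :: "('a \<Rightarrow> real) set" and p :: "('a \<Rightarrow> real) \<Rightarrow> real"
  assumes V_add: "\<And>X Y. X\<in>V \<Longrightarrow> Y\<in>V \<Longrightarrow> (\<lambda>\<omega>. X \<omega> + Y \<omega>) \<in> V"
   and V_sc: "\<And>X c. X\<in>V \<Longrightarrow> (\<lambda>\<omega>. c * X \<omega>) \<in> V"
   and p_add: "\<And>X Y. X\<in>V \<Longrightarrow> Y\<in>V \<Longrightarrow> p (\<lambda>\<omega>. X \<omega> + Y \<omega>) \<le> p X + p Y"
   and p_sc: "\<And>X c. X\<in>V \<Longrightarrow> c > 0 \<Longrightarrow> p (\<lambda>\<omega>. c * X \<omega>) = c * p X"
   and G: "hb_ok V p x0 G" and y: "y \<in> V" and ny: "\<forall>a. (y,a) \<notin> G"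
  shows "\<exists>G'. hb_ok V p x0 G' \<and> G \<subseteq> G' \<and> G' \<noteq> G"
proof -
  have funG: "\<And>x a b. (x,a)\<in>G \<Longrightarrow> (x,b)\<in>G \<Longrightarrow> a = b" and x0G: "(x0, p x0) \<in> G"
    and addG: "\<And>x a z b. (x,a)\<in>G \<Longrightarrow> (z,b)\<in>G \<Longrightarrow> ((\<lambda>\<omega>. x \<omega> + z \<omega>), a + b) \<in> G"
    and scG: "\<And>x a c. (x,a)\<in>G \<Longrightarrow> ((\<lambda>\<omega>. c * x \<omega>), c * a) \<in> G"
    and domG: "\<And>x a. (x,a)\<in>G \<Longrightarrow> x \<in> V \<and> a \<le> p x"
    using G unfolding hb_ok_def by blast+
  have zG: "((\<lambda>\<omega>. 0), 0) \<in> G" using scG[OF x0G, of 0] by simp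
  have Vm: "(\<lambda>\<omega>. x \<omega> + -1 * y \<omega>) \<in> V" if "x \<in> V" for x
    using V_add[OF that V_sc[OF y, of "-1"]] .
  have Vp: "(\<lambda>\<omega>. x \<omega> + y \<omega>) \<in> V" if "x \<in> V" for x
    using V_add[OF that y] .
  define D where "D = {a - p (\<lambda>\<omega>. x \<omega> + -1 * y \<omega>) | x a. (x,a) \<in> G}"
  define c where "c = Sup D"
  have key: "a - p (\<lambda>\<omega>. x \<omega> + -1 * y \<omega>) \<le> p (\<lambda>\<omega>. x' \<omega> + y \<omega>) - a'"
    if "(x,a)\<in>G" "(x',a')\<in>G" for x a x' a'
  proof -
    have xV: "x \<in> V" "x' \<in> V" using domG that by auto
    have "a + a' \<le> p (\<lambda>\<omega>. x \<omega> + x' \<omega>)" using domG[OF addG[OF that]] by simp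
    also have "(\<lambda>\<omega>. x \<omega> + x' \<omega>) = (\<lambda>\<omega>. (\<lambda>\<omega>. x \<omega> + -1 * y \<omega>) \<omega> + (\<lambda>\<omega>. x' \<omega> + y \<omega>) \<omega>)"
      by auto
    also have "p \<dots> \<le> p (\<lambda>\<omega>. x \<omega> + -1 * y \<omega>) + p (\<lambda>\<omega>. x' \<omega> + y \<omega>)"
      by (rule p_add) (use xV Vm Vp in auto)
    finally show ?thesis by simp
  qed
  have Dne: "D \<noteq> {}" using zG unfolding D_def by blast
  have Dbdd: "bdd_above D" unfolding D_def bdd_above_def using key zG by blast
  have c_lo: "a - p (\<lambda>\<omega>. x \<omega> + -1 * y \<omega>) \<le> c" if "(x,a)\<in>G" for x a
    unfolding c_def by (rule cSup_upper[OF _ Dbdd]) (use that D_def in blast)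
  have c_hi: "c \<le> p (\<lambda>\<omega>. x' \<omega> + y \<omega>) - a'" if "(x',a')\<in>G" for x' a'
    unfolding c_def by (rule cSup_least[OF Dne]) (use key that D_def in blast)
  define G' where "G' = {((\<lambda>\<omega>. x \<omega> + t * y \<omega>), a + t * c) | x a t. (x, a) \<in> G}"
  have sub: "G \<subseteq> G'"
  proof
    fix z assume "z \<in> G"
    then obtain x a where z: "z = (x,a)" "(x,a) \<in> G" by (cases z) auto
    moreover have "z = ((\<lambda>\<omega>. x \<omega> + 0 * y \<omega>), a + 0 * c)" using z by simp
    ultimately show "z \<in> G'" unfolding G'_def by blast
  qed
  have yG': "(y, c) \<in> G'" unfolding G'_def
    by (rule CollectI, rule exI[of _ "\<lambda>\<omega>. 0"], rule exI[of _ 0], rule exI[of _ 1]) (simp add: zG)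
  have neq: "G' \<noteq> G" using yG' ny by blast
  have ok: "hb_ok V p x0 G'"
    unfolding hb_ok_def
  proof (intro conjI allI impI)
    fix z a b assume za: "(z,a) \<in> G'" and zb: "(z,b) \<in> G'"
    from za obtain x1 a1 t1 where 1: "z = (\<lambda>\<omega>. x1 \<omega> + t1 * y \<omega>)" "a = a1 + t1 * c" "(x1,a1)\<in>G"
      unfolding G'_def by blast
    from zb obtain x2 a2 t2 where 2: "z = (\<lambda>\<omega>. x2 \<omega> + t2 * y \<omega>)" "b = a2 + t2 * c" "(x2,a2)\<in>G"
      unfolding G'_def by blast
    show "a = b"
    proof (cases "t1 = t2")
      case True
      then have "x1 = x2" using 1 2 by (auto simp: fun_eq_iff dest: fun_cong)
      then show ?thesis using 1 2 True funG by blast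
    next
      case False
      have d: "((\<lambda>\<omega>. x1 \<omega> + (-1) * x2 \<omega>), a1 + (-1) * a2) \<in> G"
        using addG[OF 1(3) scG[OF 2(3)]] .
      have "((\<lambda>\<omega>. (1/(t2 - t1)) * (x1 \<omega> + (-1) * x2 \<omega>)), (1/(t2-t1)) * (a1 + (-1) * a2)) \<in> G"
        by (rule scG[OF d])
      moreover have "(\<lambda>\<omega>. (1/(t2 - t1)) * (x1 \<omega> + (-1) * x2 \<omega>)) = y"
      proof
        fix \<omega>
        have "x1 \<omega> + t1 * y \<omega> = x2 \<omega> + t2 * y \<omega>" using 1(1) 2(1) by metis
        then have "x1 \<omega> - x2 \<omega> = (t2 - t1) * y \<omega>" by (simp add: algebra_simps)
        then show "(1/(t2 - t1)) * (x1 \<omega> + (-1) * x2 \<omega>) = y \<omega>" using False by (simp add: field_simps)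
      qed
      ultimately show ?thesis using ny by metis
    qed
  next
    show "(x0, p x0) \<in> G'" using sub x0G by blast
  next
    fix z a w b assume za: "(z,a) \<in> G'" and wb: "(w,b) \<in> G'"
    from za obtain x1 a1 t1 where 1: "z = (\<lambda>\<omega>. x1 \<omega> + t1 * y \<omega>)" "a = a1 + t1 * c" "(x1,a1)\<in>G"
      unfolding G'_def by blast
    from wb obtain x2 a2 t2 where 2: "w = (\<lambda>\<omega>. x2 \<omega> + t2 * y \<omega>)" "b = a2 + t2 * c" "(x2,a2)\<in>G"
      unfolding G'_def by blast
    show "((\<lambda>\<omega>. z \<omega> + w \<omega>), a + b) \<in> G'"
      unfolding G'_def
      apply (rule CollectI, rule exI[of _ "\<lambda>\<omega>. x1 \<omega> + x2 \<omega>"], rule exI[of _ "a1 + a2"], rule exI[of _ "t1 + t2"])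
      using addG[OF 1(3) 2(3)] 1 2 by (auto simp: fun_eq_iff algebra_simps)
  next
    fix z a d assume za: "(z,a) \<in> G'"
    from za obtain x1 a1 t1 where 1: "z = (\<lambda>\<omega>. x1 \<omega> + t1 * y \<omega>)" "a = a1 + t1 * c" "(x1,a1)\<in>G"
      unfolding G'_def by blast
    show "((\<lambda>\<omega>. d * z \<omega>), d * a) \<in> G'"
      unfolding G'_def
      apply (rule CollectI, rule exI[of _ "\<lambda>\<omega>. d * x1 \<omega>"], rule exI[of _ "d * a1"], rule exI[of _ "d * t1"])
      using scG[OF 1(3), of d] 1 by (auto simp: fun_eq_iff algebra_simps)
  next
    fix z a assume za: "(z,a) \<in> G'"
    from za obtain x1 a1 t where 1: "z = (\<lambda>\<omega>. x1 \<omega> + t * y \<omega>)" "a = a1 + t * c" "(x1,a1)\<in>G"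
      unfolding G'_def by blast
    have x1V: "x1 \<in> V" and a1: "a1 \<le> p x1" using domG[OF 1(3)] by auto
    show "z \<in> V" using 1(1) V_add[OF x1V V_sc[OF y, of t]] by simp
    show "a \<le> p z"
    proof (cases "t = 0")
      case True then show ?thesis using 1 a1 by simp
    next
      case False
      have G1: "((\<lambda>\<omega>. (1/\<bar>t\<bar>) * x1 \<omega>), (1/\<bar>t\<bar>) * a1) \<in> G" using scG[OF 1(3)] .
      have V1: "(\<lambda>\<omega>. (1/\<bar>t\<bar>) * x1 \<omega>) \<in> V" using domG[OF G1] by simp
      show ?thesis
      proof (cases "t > 0")
        case True
        have "(1/t) * a1 + c \<le> p (\<lambda>\<omega>. (1/t) * x1 \<omega> + y \<omega>)" using c_hi[OF G1] True by simp
        then have "t * ((1/t) * a1 + c) \<le> t * p (\<lambda>\<omega>. (1/t) * x1 \<omega> + y \<omega>)"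
          using True by (simp add: mult_left_mono)
        also have "\<dots> = p (\<lambda>\<omega>. t * ((\<lambda>\<omega>. (1/t) * x1 \<omega> + y \<omega>) \<omega>))"
          by (rule p_sc[symmetric]) (use True V1 Vp in auto)
        also have "(\<lambda>\<omega>. t * ((\<lambda>\<omega>. (1/t) * x1 \<omega> + y \<omega>) \<omega>)) = z"
          using 1(1) True by (auto simp: fun_eq_iff field_simps)
        finally have "t * ((1/t) * a1 + c) \<le> p z" .
        moreover have "t * ((1/t) * a1 + c) = a" using 1 True by (simp add: field_simps)
        ultimately show ?thesis by simp
      next
        case False
        with \<open>t \<noteq> 0\<close> have tn: "t < 0" by simp
        define s where "s = -t"
        have sp: "s > 0" using tn s_def by simp
        have "(1/s) * a1 - p (\<lambda>\<omega>. (1/s) * x1 \<omega> + -1 * y \<omega>) \<le> c" using c_lo[OF G1] tn s_def by simp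
        then have "(1/s) * a1 - c \<le> p (\<lambda>\<omega>. (1/s) * x1 \<omega> + -1 * y \<omega>)" by simp
        then have "s * ((1/s) * a1 - c) \<le> s * p (\<lambda>\<omega>. (1/s) * x1 \<omega> + -1 * y \<omega>)"
          using sp by (simp add: mult_left_mono)
        also have "\<dots> = p (\<lambda>\<omega>. s * ((\<lambda>\<omega>. (1/s) * x1 \<omega> + -1 * y \<omega>) \<omega>))"
          by (rule p_sc[symmetric]) (use sp V1 Vm tn s_def in auto)
        also have "(\<lambda>\<omega>. s * ((\<lambda>\<omega>. (1/s) * x1 \<omega> + -1 * y \<omega>) \<omega>)) = z"
          using 1(1) sp s_def by (auto simp: fun_eq_iff field_simps)
        finally have "s * ((1/s) * a1 - c) \<le> p z" .
        moreover have "s * ((1/s) * a1 - c) = a" using 1 sp s_def by (simp add: field_simps)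
        ultimately show ?thesis by simp
      qed
    qed
  qed
  show ?thesis using ok sub neq by blast
qed

lemma hahn_banach_fun:
  fixes V :: "('a \<Rightarrow> real) set" and p :: "('a \<Rightarrow> real) \<Rightarrow> real"
  assumes V_add: "\<And>X Y. X\<in>V \<Longrightarrow> Y\<in>V \<Longrightarrow> (\<lambda>\<omega>. X \<omega> + Y \<omega>) \<in> V"
   and V_sc: "\<And>X c. X\<in>V \<Longrightarrow> (\<lambda>\<omega>. c * X \<omega>) \<in> V"
   and x0: "x0 \<in> V"
   and p_add: "\<And>X Y. X\<in>V \<Longrightarrow> Y\<in>V \<Longrightarrow> p (\<lambda>\<omega>. X \<omega> + Y \<omega>) \<le> p X + p Y"
   and p_sc: "\<And>X c. X\<in>V \<Longrightarrow> c > 0 \<Longrightarrow> p (\<lambda>\<omega>. c * X \<omega>) = c * p X"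
   and p0: "p (\<lambda>\<omega>. 0) = 0"
  shows "\<exists>L. (\<forall>X\<in>V. \<forall>Y\<in>V. L (\<lambda>\<omega>. X \<omega> + Y \<omega>) = L X + L Y) \<and>
             (\<forall>X\<in>V. \<forall>c. L (\<lambda>\<omega>. c * X \<omega>) = c * L X) \<and> (\<forall>X\<in>V. L X \<le> p X) \<and> L x0 = p x0"
proof -
  define Fam where "Fam = {G. hb_ok V p x0 G}"
  define G0 where "G0 = {((\<lambda>\<omega>. t * x0 \<omega>), t * p x0) | t. True}"
  have G0: "hb_ok V p x0 G0"
    unfolding hb_ok_def
  proof (intro conjI allI impI)
    fix x a b assume "(x,a) \<in> G0" "(x,b) \<in> G0"
    then obtain t s where ts: "x = (\<lambda>\<omega>. t * x0 \<omega>)" "a = t * p x0" "x = (\<lambda>\<omega>. s * x0 \<omega>)" "b = s * p x0"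
      unfolding G0_def by blast
    show "a = b"
    proof (cases "t = s")
      case True then show ?thesis using ts by simp
    next
      case False
      have "x0 = (\<lambda>\<omega>. 0)"
      proof
        fix \<omega> have "t * x0 \<omega> = s * x0 \<omega>" using ts by metis
        then have "(t - s) * x0 \<omega> = 0" by (simp add: algebra_simps)
        then show "x0 \<omega> = 0" using False by simp
      qed
      then show ?thesis using ts p0 by simp
    qed
  next
    show "(x0, p x0) \<in> G0" unfolding G0_def
      by (rule CollectI, rule exI[of _ 1]) simp
  next
    fix x a y b assume "(x,a) \<in> G0" "(y,b) \<in> G0"
    then obtain t s where ts: "x = (\<lambda>\<omega>. t * x0 \<omega>)" "a = t * p x0" "y = (\<lambda>\<omega>. s * x0 \<omega>)" "b = s * p x0"
      unfolding G0_def by blast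
    show "((\<lambda>\<omega>. x \<omega> + y \<omega>), a + b) \<in> G0" unfolding G0_def
      by (rule CollectI, rule exI[of _ "t + s"]) (simp add: ts algebra_simps)
  next
    fix x a c assume "(x,a) \<in> G0"
    then obtain t where ts: "x = (\<lambda>\<omega>. t * x0 \<omega>)" "a = t * p x0"
      unfolding G0_def by blast
    show "((\<lambda>\<omega>. c * x \<omega>), c * a) \<in> G0" unfolding G0_def
      by (rule CollectI, rule exI[of _ "c * t"]) (simp add: ts algebra_simps)
  next
    fix x a assume "(x,a) \<in> G0"
    then obtain t where ts: "x = (\<lambda>\<omega>. t * x0 \<omega>)" "a = t * p x0"
      unfolding G0_def by blast
    show "x \<in> V" using ts V_sc[OF x0] by simp
    show "a \<le> p x"
    proof (cases "t \<ge> 0")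
      case True
      show ?thesis
      proof (cases "t = 0")
        case True then show ?thesis using ts p0 by simp
      next
        case False then show ?thesis using ts p_sc[OF x0, of t] True by simp
      qed
    next
      case False
      have "p (\<lambda>\<omega>. 0) = p (\<lambda>\<omega>. (\<lambda>\<omega>. t * x0 \<omega>) \<omega> + (\<lambda>\<omega>. (-t) * x0 \<omega>) \<omega>)"
        by (simp add: algebra_simps)
      also have "\<dots> \<le> p (\<lambda>\<omega>. t * x0 \<omega>) + p (\<lambda>\<omega>. (-t) * x0 \<omega>)"
        by (rule p_add) (rule V_sc[OF x0], rule V_sc[OF x0])
      also have "p (\<lambda>\<omega>. (-t) * x0 \<omega>) = (-t) * p x0" using p_sc[OF x0, of "-t"] False by simp
      finally show ?thesis using ts p0 by simp
    qed
  qed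
  have "\<exists>G\<in>Fam. \<forall>X\<in>Fam. G \<subseteq> X \<longrightarrow> X = G"
  proof (rule Zorn_Lemma2, intro ballI)
    fix C assume C: "C \<in> chains Fam"
    show "\<exists>U\<in>Fam. \<forall>X\<in>C. X \<subseteq> U"
    proof (cases "C = {}")
      case True then show ?thesis using G0 Fam_def by blast
    next
      case False
      have CF: "\<And>G. G \<in> C \<Longrightarrow> hb_ok V p x0 G" using C unfolding chains_def Fam_def by blast
      have ch: "\<And>G1 G2. G1 \<in> C \<Longrightarrow> G2 \<in> C \<Longrightarrow> G1 \<subseteq> G2 \<or> G2 \<subseteq> G1"
        using C unfolding chains_def chain_subset_def by blast
      have "hb_ok V p x0 (\<Union>C)"
        unfolding hb_ok_def
      proof (intro conjI allI impI)
        fix x a b assume "(x,a) \<in> \<Union>C" "(x,b) \<in> \<Union>C"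
        then obtain G1 G2 where "G1 \<in> C" "G2 \<in> C" "(x,a) \<in> G1" "(x,b) \<in> G2" by blast
        then show "a = b" using ch[of G1 G2] hb_okD(1)[OF CF[of G1]] hb_okD(1)[OF CF[of G2]] by blast
      next
        obtain G1 where "G1 \<in> C" using False by blast
        then show "(x0, p x0) \<in> \<Union>C" using hb_okD(2)[OF CF[of G1]] by blast
      next
        fix x a y b assume "(x,a) \<in> \<Union>C" "(y,b) \<in> \<Union>C"
        then obtain G1 G2 where G12: "G1 \<in> C" "G2 \<in> C" "(x,a) \<in> G1" "(y,b) \<in> G2" by blast
        show "((\<lambda>\<omega>. x \<omega> + y \<omega>), a + b) \<in> \<Union>C"
        proof (cases "G1 \<subseteq> G2")
          case True then show ?thesis using G12 hb_okD(3)[OF CF[of G2]] by blast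
        next
          case False then have "G2 \<subseteq> G1" using ch G12 by blast
          then show ?thesis using G12 hb_okD(3)[OF CF[of G1]] by blast
        qed
      next
        fix x a c assume "(x,a) \<in> \<Union>C"
        then obtain G1 where "G1 \<in> C" "(x,a) \<in> G1" by blast
        then show "((\<lambda>\<omega>. c * x \<omega>), c * a) \<in> \<Union>C" using hb_okD(4)[OF CF[of G1]] by blast
      next
        fix x a assume "(x,a) \<in> \<Union>C"
        then obtain G1 where "G1 \<in> C" "(x,a) \<in> G1" by blast
        then show "x \<in> V" "a \<le> p x" using hb_okD(5,6)[OF CF[of G1]] by blast+
      qed
      then show ?thesis unfolding Fam_def by blast
    qed
  qed
  then obtain G where G: "hb_ok V p x0 G" and Gmax: "\<And>X. hb_ok V p x0 X \<Longrightarrow> G \<subseteq> X \<Longrightarrow> X = G"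
    unfolding Fam_def by blast
  have tot: "\<exists>a. (y,a) \<in> G" if yV: "y \<in> V" for y
  proof (rule ccontr)
    assume "\<nexists>a. (y, a) \<in> G"
    then obtain G' where "hb_ok V p x0 G'" "G \<subseteq> G'" "G' \<noteq> G"
      using hb_extend[OF V_add V_sc p_add p_sc G yV] by blast
    then show False using Gmax by blast
  qed
  have funG: "\<And>x a b. (x,a)\<in>G \<Longrightarrow> (x,b)\<in>G \<Longrightarrow> a = b" and x0G: "(x0, p x0) \<in> G"
    and addG: "\<And>x a z b. (x,a)\<in>G \<Longrightarrow> (z,b)\<in>G \<Longrightarrow> ((\<lambda>\<omega>. x \<omega> + z \<omega>), a + b) \<in> G"
    and scG: "\<And>x a c. (x,a)\<in>G \<Longrightarrow> ((\<lambda>\<omega>. c * x \<omega>), c * a) \<in> G"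
    and domG: "\<And>x a. (x,a)\<in>G \<Longrightarrow> x \<in> V \<and> a \<le> p x"
    using G unfolding hb_ok_def by blast+
  define L where "L x = (THE a. (x,a) \<in> G)" for x
  have LG: "(x, L x) \<in> G" if xV: "x \<in> V" for x
  proof -
    obtain a where a: "(x,a) \<in> G" using tot[OF xV] by blast
    have "(THE a. (x,a) \<in> G) = a" using a funG by blast
    then show ?thesis unfolding L_def using a by simp
  qed
  have Leq: "L x = a" if "(x,a) \<in> G" for x a
  proof -
    have "x \<in> V" using domG[OF that] by blast
    then show ?thesis using LG[of x] funG that by blast
  qed
  show ?thesis
  proof (intro exI[of _ L] conjI ballI allI)
    fix X Y assume "X \<in> V" "Y \<in> V"
    then show "L (\<lambda>\<omega>. X \<omega> + Y \<omega>) = L X + L Y" using Leq addG LG by blast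
  next
    fix X c assume "X \<in> V"
    then show "L (\<lambda>\<omega>. c * X \<omega>) = c * L X" using Leq scG LG by blast
  next
    fix X assume "X \<in> V"
    then show "L X \<le> p X" using LG domG by blast
  next
    show "L x0 = p x0" using Leq x0G by blast
  qed
qed


lemma Bb_iff: "X \<in> Bb M \<longleftrightarrow> X \<in> borel_measurable M \<and> (\<exists>B. \<forall>\<omega>\<in>space M. \<bar>X \<omega>\<bar> \<le> B)"
  unfolding Bb_def bounded_iff by auto

lemma Bb_add: "X \<in> Bb M \<Longrightarrow> Y \<in> Bb M \<Longrightarrow> (\<lambda>\<omega>. X \<omega> + Y \<omega>) \<in> Bb M"
proof -
  assume X: "X \<in> Bb M" and Y: "Y \<in> Bb M"
  then obtain B1 B2 where B: "\<forall>\<omega>\<in>space M. \<bar>X \<omega>\<bar> \<le> B1" "\<forall>\<omega>\<in>space M. \<bar>Y \<omega>\<bar> \<le> B2"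
    and m: "X \<in> borel_measurable M" "Y \<in> borel_measurable M" unfolding Bb_iff by blast
  have "\<forall>\<omega>\<in>space M. \<bar>X \<omega> + Y \<omega>\<bar> \<le> B1 + B2"
  proof
    fix \<omega> assume "\<omega> \<in> space M"
    then have "\<bar>X \<omega>\<bar> \<le> B1" "\<bar>Y \<omega>\<bar> \<le> B2" using B by auto
    then show "\<bar>X \<omega> + Y \<omega>\<bar> \<le> B1 + B2" by linarith
  qed
  then show ?thesis unfolding Bb_iff using m by auto
qed

lemma Bb_sc: "X \<in> Bb M \<Longrightarrow> (\<lambda>\<omega>. c * X \<omega>) \<in> Bb M"
proof -
  assume X: "X \<in> Bb M"
  then obtain B1 where B: "\<forall>\<omega>\<in>space M. \<bar>X \<omega>\<bar> \<le> B1"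
    and m: "X \<in> borel_measurable M" unfolding Bb_iff by blast
  have "\<forall>\<omega>\<in>space M. \<bar>c * X \<omega>\<bar> \<le> \<bar>c\<bar> * B1" using B by (simp add: abs_mult mult_left_mono)
  then show ?thesis unfolding Bb_iff using m by auto
qed

lemma Bb_const: "(\<lambda>\<omega>. c) \<in> Bb M"
  unfolding Bb_iff by auto

lemma Bb_indicator: "A \<in> sets M \<Longrightarrow> (indicator A :: 'a \<Rightarrow> real) \<in> Bb M"
  unfolding Bb_iff by (auto intro!: exI[of _ 1] simp: indicator_def)

lemma simple_Bb: "simple_fn M s \<Longrightarrow> s \<in> Bb M"
  unfolding simple_fn_def Bb_def by (auto intro: finite_imp_bounded)

lemma const_simple: "simple_fn M (\<lambda>\<omega>. c)"
  unfolding simple_fn_def by (auto intro: finite_subset[of _ "{c}"])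

lemma cInf_affine:
  fixes A :: "real set"
  assumes "A \<noteq> {}" "bdd_below A" "l > 0"
  shows "Inf ((\<lambda>h. l * h + m) ` A) = l * Inf A + m"
proof (rule antisym)
  obtain b where b: "\<And>y. y \<in> A \<Longrightarrow> b \<le> y" using assms(2) unfolding bdd_below_def by blast
  have "\<And>y. y \<in> A \<Longrightarrow> l * b + m \<le> l * y + m" using b assms(3) by simp
  then have bb: "bdd_below ((\<lambda>h. l * h + m) ` A)"
    unfolding bdd_below_def by blast
  have "\<forall>a\<in>A. (Inf ((\<lambda>h. l * h + m) ` A) - m) / l \<le> a"
  proof
    fix a assume "a \<in> A"
    then have "Inf ((\<lambda>h. l * h + m) ` A) \<le> l * a + m" by (intro cInf_lower[OF _ bb]) auto
    then show "(Inf ((\<lambda>h. l * h + m) ` A) - m) / l \<le> a" using assms(3) by (simp add: field_simps)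
  qed
  then have "(Inf ((\<lambda>h. l * h + m) ` A) - m) / l \<le> Inf A" using assms(1) by (intro cInf_greatest) auto
  then show "Inf ((\<lambda>h. l * h + m) ` A) \<le> l * Inf A + m" using assms(3) by (simp add: field_simps)
next
  show "l * Inf A + m \<le> Inf ((\<lambda>h. l * h + m) ` A)"
    using assms by (intro cInf_greatest) (auto intro: cInf_lower)
qed

lemma inf_add_le:
  fixes A B :: "real set"
  assumes "A \<noteq> {}" "B \<noteq> {}" "\<And>a b. a \<in> A \<Longrightarrow> b \<in> B \<Longrightarrow> c \<le> a + b"
  shows "c \<le> Inf A + Inf B"
proof -
  have "c - b \<le> Inf A" if "b \<in> B" for b
  proof (rule cInf_greatest[OF assms(1)])
    fix a assume "a \<in> A" then have "c \<le> a + b" using assms(3) that by blast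
    then show "c - b \<le> a" by linarith
  qed
  then have "\<And>b. b \<in> B \<Longrightarrow> c - Inf A \<le> b" by (simp add: algebra_simps)
  then have "c - Inf A \<le> Inf B" using assms(2) by (intro cInf_greatest) auto
  then show ?thesis by simp
qed

lemma lin_sum:
  assumes V_add: "\<And>X Y. X\<in>V \<Longrightarrow> Y\<in>V \<Longrightarrow> (\<lambda>\<omega>. X \<omega> + Y \<omega>) \<in> V"
    and V0: "(\<lambda>\<omega>. 0) \<in> V"
    and L_add: "\<forall>X\<in>V. \<forall>Y\<in>V. L (\<lambda>\<omega>. X \<omega> + Y \<omega>) = L X + L Y"
    and L0: "L (\<lambda>\<omega>. 0) = (0::real)"
    and "finite F" "\<forall>y\<in>F. f y \<in> V"
  shows "(\<lambda>\<omega>. \<Sum>y\<in>F. f y \<omega>) \<in> V \<and> L (\<lambda>\<omega>. \<Sum>y\<in>F. (f y \<omega> :: real)) = (\<Sum>y\<in>F. L (f y))"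
  using assms(5,6)
proof (induction F rule: finite_induct)
  case empty then show ?case using V0 L0 by simp
next
  case (insert y F)
  have e: "(\<lambda>\<omega>. \<Sum>y\<in>insert y F. f y \<omega>) = (\<lambda>\<omega>. f y \<omega> + (\<lambda>\<omega>. \<Sum>y\<in>F. f y \<omega>) \<omega>)"
    using insert by simp
  show ?case unfolding e using insert V_add L_add by simp
qed

lemma ba1_partition:
  assumes P: "P \<in> ba1 M" and s: "simple_fn M s"
  shows "(\<Sum>y\<in>s ` space M. P (s -` {y} \<inter> space M)) = 1"
proof -
  have sm: "s \<in> borel_measurable M" and fin: "finite (s ` space M)" using s unfolding simple_fn_def by auto
  have add: "\<And>A B. A\<in>sets M \<Longrightarrow> B\<in>sets M \<Longrightarrow> A \<inter> B = {} \<Longrightarrow> P (A \<union> B) = P A + P B"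
    and sp: "P (space M) = 1" using P unfolding ba1_def by auto
  have "finite F \<Longrightarrow> (\<Sum>y\<in>F. P (s -` {y} \<inter> space M)) = P (s -` F \<inter> space M)" for F
  proof (induction F rule: finite_induct)
    case empty
    have "P {} = P ({} \<union> {}) " by simp
    also have "\<dots> = P {} + P {}" by (rule add) auto
    finally show ?case by simp
  next
    case (insert y F)
    have e: "s -` insert y F \<inter> space M = (s -` {y} \<inter> space M) \<union> (s -` F \<inter> space M)" by auto
    have m1: "s -` {y} \<inter> space M \<in> sets M" by (rule measurable_sets[OF sm]) auto
    have m2: "s -` F \<inter> space M \<in> sets M"
      by (rule measurable_sets[OF sm]) (auto intro: borel_closed finite_imp_closed insert)
    have d: "(s -` {y} \<inter> space M) \<inter> (s -` F \<inter> space M) = {}" using insert by auto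
    show ?case unfolding e using insert add[OF m1 m2 d] by simp
  qed
  from this[OF fin] show ?thesis using sp by (simp add: Int_absorb1 subset_iff)
qed

lemma simple_int_le:
  assumes P: "P \<in> ba1 M" and s: "simple_fn M s" and b: "\<forall>\<omega>\<in>space M. s \<omega> \<le> b"
  shows "simple_int M P s \<le> b"
proof -
  have sm: "s \<in> borel_measurable M" using s unfolding simple_fn_def by auto
  have "simple_int M P s = (\<Sum>y\<in>s ` space M. y * P (s -` {y} \<inter> space M))"
    unfolding simple_int_def ..
  also have "\<dots> \<le> (\<Sum>y\<in>s ` space M. b * P (s -` {y} \<inter> space M))"
  proof (rule sum_mono)
    fix y assume y: "y \<in> s ` space M"
    have "s -` {y} \<inter> space M \<in> sets M" by (rule measurable_sets[OF sm]) auto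
    then have "0 \<le> P (s -` {y} \<inter> space M)" using P unfolding ba1_def by auto
    moreover have "y \<le> b" using y b by auto
    ultimately show "y * P (s -` {y} \<inter> space M) \<le> b * P (s -` {y} \<inter> space M)"
      by (rule mult_right_mono[rotated])
  qed
  also have "\<dots> = b" using ba1_partition[OF P s] by (simp add: sum_distrib_left[symmetric])
  finally show ?thesis .
qed

lemma T_ne: "X \<in> Bb M \<Longrightarrow> {simple_int M P s | s. simple_fn M s \<and> (\<forall>\<omega>\<in>space M. s \<omega> \<le> X \<omega>)} \<noteq> {}"
proof -
  assume "X \<in> Bb M"
  then obtain B where B: "\<forall>\<omega>\<in>space M. \<bar>X \<omega>\<bar> \<le> B" unfolding Bb_iff by blast
  have "\<forall>\<omega>\<in>space M. (\<lambda>\<omega>. -B) \<omega> \<le> X \<omega>" using B by (auto simp: abs_le_iff)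
  then show ?thesis using const_simple[of M "-B"] by blast
qed

lemma T_bdd: "P \<in> ba1 M \<Longrightarrow> X \<in> Bb M \<Longrightarrow> bdd_above {simple_int M P s | s. simple_fn M s \<and> (\<forall>\<omega>\<in>space M. s \<omega> \<le> X \<omega>)}"
proof -
  assume P: "P \<in> ba1 M" and "X \<in> Bb M"
  then obtain B where B: "\<forall>\<omega>\<in>space M. \<bar>X \<omega>\<bar> \<le> B" unfolding Bb_iff by blast
  have "simple_int M P s \<le> B" if "simple_fn M s" "\<forall>\<omega>\<in>space M. s \<omega> \<le> X \<omega>" for s
  proof (rule simple_int_le[OF P that(1)])
    show "\<forall>\<omega>\<in>space M. s \<omega> \<le> B" using that(2) B by (fastforce simp: abs_le_iff)
  qed
  then show ?thesis unfolding bdd_above_def by blast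
qed

lemma fa_expect_mono:
  assumes P: "P \<in> ba1 M" and X: "X \<in> Bb M" and Y: "Y \<in> Bb M" and le: "\<forall>\<omega>\<in>space M. X \<omega> \<le> Y \<omega>"
  shows "fa_expect M P X \<le> fa_expect M P Y"
  unfolding fa_expect_def
  by (rule cSup_subset_mono[OF T_ne[OF X] T_bdd[OF P Y]]) (use le in force)


theorem corollary3p3:
  fixes M :: "'a measure" and C :: "('a \<Rightarrow> real) set" and H :: "('a \<Rightarrow> real) \<Rightarrow> real"
  assumes C_sub: "C \<subseteq> Bb M"
    and C_add: "\<And>X Y. X \<in> C \<Longrightarrow> Y \<in> C \<Longrightarrow> (\<lambda>\<omega>. X \<omega> + Y \<omega>) \<in> C"
    and C_smult: "\<And>X a. X \<in> C \<Longrightarrow> (\<lambda>\<omega>. a * X \<omega>) \<in> C"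
    and C_const: "\<And>c. (\<lambda>\<omega>. c) \<in> C"
    and H: "sublinear_premium_principle M C H"
  defines "R \<equiv> \<lambda>X. Inf {H X0 | X0. X0 \<in> C \<and> (\<forall>\<omega>\<in>space M. X \<omega> \<le> X0 \<omega>)}"
    and "\<P> \<equiv> {P \<in> ba1 M. \<forall>X\<in>C. fa_expect M P X \<le> H X}"
  shows "coherent_risk_measure M R \<and>
         (\<forall>X\<in>Bb M. (\<exists>P\<in>\<P>. R X = fa_expect M P X) \<and> (\<forall>P\<in>\<P>. fa_expect M P X \<le> R X))"
proof -
  have Hcash: "\<And>X m. X \<in> C \<Longrightarrow> H (\<lambda>\<omega>. X \<omega> + m) = H X + m"
   and H0: "H (\<lambda>\<omega>. 0) = 0"
   and Hpos: "\<And>X. X \<in> C \<Longrightarrow> \<forall>\<omega>\<in>space M. 0 \<le> X \<omega> \<Longrightarrow> 0 \<le> H X"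
   and Hconv: "\<And>X Y l. X\<in>C \<Longrightarrow> Y\<in>C \<Longrightarrow> 0 \<le> l \<Longrightarrow> l \<le> 1 \<Longrightarrow>
        H (\<lambda>\<omega>. l * X \<omega> + (1 - l) * Y \<omega>) \<le> l * H X + (1 - l) * H Y"
   and Hhom: "\<And>X l. X\<in>C \<Longrightarrow> 0 < l \<Longrightarrow> H (\<lambda>\<omega>. l * X \<omega>) = l * H X"
    using H unfolding sublinear_premium_principle_def premium_principle_def convex_on_C_def by auto
  have Hconst: "H (\<lambda>\<omega>. c) = c" for c using Hcash[OF C_const[of 0], of c] H0 by simp
  have Hlow: "b \<le> H X" if X: "X \<in> C" and b: "\<forall>\<omega>\<in>space M. b \<le> X \<omega>" for X b
  proof -
    have "0 \<le> H (\<lambda>\<omega>. X \<omega> + - b)" using Hpos[OF C_add[OF X C_const[of "-b"]]] b by simp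
    then show ?thesis using Hcash[OF X, of "-b"] by simp
  qed
  have Hsub: "H (\<lambda>\<omega>. X \<omega> + Y \<omega>) \<le> H X + H Y" if X: "X \<in> C" and Y: "Y \<in> C" for X Y
  proof -
    have "H (\<lambda>\<omega>. (1/2) * (\<lambda>\<omega>. 2 * X \<omega>) \<omega> + (1 - 1/2) * (\<lambda>\<omega>. 2 * Y \<omega>) \<omega>)
       \<le> (1/2) * H (\<lambda>\<omega>. 2 * X \<omega>) + (1 - 1/2) * H (\<lambda>\<omega>. 2 * Y \<omega>)"
      by (rule Hconv) (use C_smult X Y in auto)
    then show ?thesis using Hhom[OF X, of 2] Hhom[OF Y, of 2] by simp
  qed
  define S where "S X = {H X0 | X0. X0 \<in> C \<and> (\<forall>\<omega>\<in>space M. X \<omega> \<le> X0 \<omega>)}" for X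
  have R_S: "R X = Inf (S X)" for X unfolding R_def S_def by simp
  have S_lb: "b \<le> h" if lbX: "\<forall>\<omega>\<in>space M. b \<le> X \<omega>" "h \<in> S X" for X b h
  proof -
    obtain X0 where "h = H X0" "X0 \<in> C" "\<forall>\<omega>\<in>space M. X \<omega> \<le> X0 \<omega>" using lbX(2) unfolding S_def by blast
    then show ?thesis using Hlow[of X0 b] lbX(1) by force
  qed
  have S_const: "b \<in> S X" if "\<forall>\<omega>\<in>space M. X \<omega> \<le> b" for X b
    unfolding S_def using that C_const[of b] Hconst[of b] by force
  have Bbound: "\<exists>B. \<forall>\<omega>\<in>space M. -B \<le> X \<omega> \<and> X \<omega> \<le> B" if XB: "X \<in> Bb M" for X
  proof -
    obtain B where "\<forall>\<omega>\<in>space M. \<bar>X \<omega>\<bar> \<le> B" using XB unfolding Bb_iff by blast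
    then have "\<forall>\<omega>\<in>space M. -B \<le> X \<omega> \<and> X \<omega> \<le> B" by (auto simp: abs_le_iff)
    then show ?thesis by blast
  qed
  have S_ne: "S X \<noteq> {}" if "X \<in> Bb M" for X
    using Bbound[OF that] S_const by blast
  have S_bdd: "bdd_below (S X)" if XB: "X \<in> Bb M" for X
  proof -
    obtain B where "\<forall>\<omega>\<in>space M. -B \<le> X \<omega> \<and> X \<omega> \<le> B" using Bbound[OF XB] by blast
    then show ?thesis unfolding bdd_below_def using S_lb[of "-B" X] by blast
  qed
  have R_le: "R X \<le> H X0" if "X \<in> Bb M" "X0 \<in> C" "\<forall>\<omega>\<in>space M. X \<omega> \<le> X0 \<omega>" for X X0
    unfolding R_S by (rule cInf_lower[OF _ S_bdd[OF that(1)]]) (use that S_def in blast)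
  have R_ub: "R X \<le> b" if "X \<in> Bb M" "\<forall>\<omega>\<in>space M. X \<omega> \<le> b" for X b
    unfolding R_S by (rule cInf_lower[OF S_const[OF that(2)] S_bdd[OF that(1)]])
  have R_lb: "b \<le> R X" if "X \<in> Bb M" "\<forall>\<omega>\<in>space M. b \<le> X \<omega>" for X b
    unfolding R_S by (rule cInf_greatest[OF S_ne[OF that(1)]]) (use S_lb that in blast)
  have R_const: "R (\<lambda>\<omega>. c) = c" for c
    using R_ub[OF Bb_const, of c c] R_lb[OF Bb_const, of c c] by simp
  have R_mono: "R X \<le> R Y" if "X \<in> Bb M" "Y \<in> Bb M" "\<forall>\<omega>\<in>space M. X \<omega> \<le> Y \<omega>" for X Y
    unfolding R_S
    by (rule cInf_superset_mono[OF S_ne[OF that(2)] S_bdd[OF that(1)]]) (use that(3) S_def in force)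
  have S_cash: "S (\<lambda>\<omega>. X \<omega> + m) = (\<lambda>h. 1 * h + m) ` S X" for X m
  proof (rule set_eqI, rule iffI)
    fix h assume "h \<in> S (\<lambda>\<omega>. X \<omega> + m)"
    then obtain X0 where X0: "h = H X0" "X0 \<in> C" "\<forall>\<omega>\<in>space M. X \<omega> + m \<le> X0 \<omega>" unfolding S_def by blast
    have "(\<lambda>\<omega>. X0 \<omega> + -m) \<in> C" using C_add[OF X0(2) C_const] .
    moreover have "H (\<lambda>\<omega>. X0 \<omega> + -m) = h - m" using Hcash[OF X0(2), of "-m"] X0(1) by simp
    moreover have "\<forall>\<omega>\<in>space M. X \<omega> \<le> X0 \<omega> + - m" using X0(3) by force
    ultimately have "h - m \<in> S X" unfolding S_def by force
    then show "h \<in> (\<lambda>h. 1 * h + m) ` S X" by force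
  next
    fix h assume "h \<in> (\<lambda>h. 1 * h + m) ` S X"
    then obtain X0 where X0: "h = H X0 + m" "X0 \<in> C" "\<forall>\<omega>\<in>space M. X \<omega> \<le> X0 \<omega>" unfolding S_def by auto
    have "(\<lambda>\<omega>. X0 \<omega> + m) \<in> C" using C_add[OF X0(2) C_const] .
    moreover have "H (\<lambda>\<omega>. X0 \<omega> + m) = h" using Hcash[OF X0(2)] X0(1) by simp
    ultimately show "h \<in> S (\<lambda>\<omega>. X \<omega> + m)" unfolding S_def using X0(3) by force
  qed
  have S_hom: "S (\<lambda>\<omega>. l * X \<omega>) = (\<lambda>h. l * h + 0) ` S X" if l: "l > 0" for X l
  proof (rule set_eqI, rule iffI)
    fix h assume "h \<in> S (\<lambda>\<omega>. l * X \<omega>)"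
    then obtain X0 where X0: "h = H X0" "X0 \<in> C" "\<forall>\<omega>\<in>space M. l * X \<omega> \<le> X0 \<omega>" unfolding S_def by blast
    have C1: "(\<lambda>\<omega>. (1/l) * X0 \<omega>) \<in> C" using C_smult[OF X0(2)] .
    have "H (\<lambda>\<omega>. l * (\<lambda>\<omega>. (1/l) * X0 \<omega>) \<omega>) = l * H (\<lambda>\<omega>. (1/l) * X0 \<omega>)" using Hhom[OF C1 l] .
    then have "h = l * H (\<lambda>\<omega>. (1/l) * X0 \<omega>)" using X0(1) l by simp
    moreover have "\<forall>\<omega>\<in>space M. X \<omega> \<le> (1/l) * X0 \<omega>" using X0(3) l by (auto simp: field_simps)
    ultimately show "h \<in> (\<lambda>h. l * h + 0) ` S X" unfolding S_def using C1 by force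
  next
    fix h assume "h \<in> (\<lambda>h. l * h + 0) ` S X"
    then obtain X0 where X0: "h = l * H X0" "X0 \<in> C" "\<forall>\<omega>\<in>space M. X \<omega> \<le> X0 \<omega>" unfolding S_def by auto
    have "(\<lambda>\<omega>. l * X0 \<omega>) \<in> C" using C_smult[OF X0(2)] .
    moreover have "H (\<lambda>\<omega>. l * X0 \<omega>) = h" using Hhom[OF X0(2) l] X0(1) by simp
    moreover have "\<forall>\<omega>\<in>space M. l * X \<omega> \<le> l * X0 \<omega>" using X0(3) l by simp
    ultimately show "h \<in> S (\<lambda>\<omega>. l * X \<omega>)" unfolding S_def by force
  qed
  have R_cash: "R (\<lambda>\<omega>. X \<omega> + m) = R X + m" if "X \<in> Bb M" for X m
    unfolding R_S S_cash using cInf_affine[OF S_ne[OF that] S_bdd[OF that], of 1 m] by simp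
  have R_hom: "R (\<lambda>\<omega>. l * X \<omega>) = l * R X" if "X \<in> Bb M" "l > 0" for X l
    unfolding R_S S_hom[OF that(2)] using cInf_affine[OF S_ne[OF that(1)] S_bdd[OF that(1)] that(2), of 0] by simp
  have R_sub: "R (\<lambda>\<omega>. X \<omega> + Y \<omega>) \<le> R X + R Y" if X: "X \<in> Bb M" and Y: "Y \<in> Bb M" for X Y
    unfolding R_S[of X] R_S[of Y]
  proof (rule inf_add_le[OF S_ne[OF X] S_ne[OF Y]])
    fix a b assume "a \<in> S X" "b \<in> S Y"
    then obtain X0 Y0 where X0: "a = H X0" "X0 \<in> C" "\<forall>\<omega>\<in>space M. X \<omega> \<le> X0 \<omega>"
      and Y0: "b = H Y0" "Y0 \<in> C" "\<forall>\<omega>\<in>space M. Y \<omega> \<le> Y0 \<omega>" unfolding S_def by blast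
    have "R (\<lambda>\<omega>. X \<omega> + Y \<omega>) \<le> H (\<lambda>\<omega>. X0 \<omega> + Y0 \<omega>)"
      by (rule R_le[OF Bb_add[OF X Y] C_add[OF X0(2) Y0(2)]]) (use X0(3) Y0(3) in force)
    also have "\<dots> \<le> a + b" using Hsub[OF X0(2) Y0(2)] X0(1) Y0(1) by simp
    finally show "R (\<lambda>\<omega>. X \<omega> + Y \<omega>) \<le> a + b" .
  qed
  have coh: "coherent_risk_measure M R"
    unfolding coherent_risk_measure_def using R_mono R_cash R_hom R_sub by blast
  have part2: "(\<exists>P\<in>\<P>. R X = fa_expect M P X) \<and> (\<forall>P\<in>\<P>. fa_expect M P X \<le> R X)" if X: "X \<in> Bb M" for X
  proof
    show "\<forall>P\<in>\<P>. fa_expect M P X \<le> R X"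
    proof
      fix P assume "P \<in> \<P>"
      then have P: "P \<in> ba1 M" and PH: "\<And>Y. Y \<in> C \<Longrightarrow> fa_expect M P Y \<le> H Y" unfolding \<P>_def by auto
      show "fa_expect M P X \<le> R X" unfolding R_S
      proof (rule cInf_greatest[OF S_ne[OF X]])
        fix h assume "h \<in> S X"
        then obtain X0 where X0: "h = H X0" "X0 \<in> C" "\<forall>\<omega>\<in>space M. X \<omega> \<le> X0 \<omega>" unfolding S_def by blast
        have "fa_expect M P X \<le> fa_expect M P X0" using fa_expect_mono[OF P X _ X0(3)] X0(2) C_sub by blast
        also have "\<dots> \<le> h" using PH[OF X0(2)] X0(1) by simp
        finally show "fa_expect M P X \<le> h" .
      qed
    qed
  next
    show "\<exists>P\<in>\<P>. R X = fa_expect M P X"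
    proof -
      have R0: "R (\<lambda>\<omega>. 0) = 0" using R_const .
      obtain L where L_add: "\<forall>X\<in>Bb M. \<forall>Y\<in>Bb M. L (\<lambda>\<omega>. X \<omega> + Y \<omega>) = L X + L Y"
        and L_sc: "\<forall>X\<in>Bb M. \<forall>c. L (\<lambda>\<omega>. c * X \<omega>) = c * L X"
        and L_R: "\<forall>X\<in>Bb M. L X \<le> R X" and L_X: "L X = R X"
        using hahn_banach_fun[of "Bb M" X R, OF Bb_add Bb_sc X R_sub R_hom R0] by blast
      have L_diff: "L (\<lambda>\<omega>. Y \<omega> + -1 * Z \<omega>) = L Y - L Z" if "Y \<in> Bb M" "Z \<in> Bb M" for Y Z
        using L_add[rule_format, OF that(1) Bb_sc[OF that(2), of "-1"]] L_sc[rule_format, OF that(2), of "-1"] by simp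
      have Lmono: "L Y \<le> L Z" if YZ: "Y \<in> Bb M" "Z \<in> Bb M" "\<forall>\<omega>\<in>space M. Y \<omega> \<le> Z \<omega>" for Y Z
      proof -
        have D: "(\<lambda>\<omega>. Y \<omega> + -1 * Z \<omega>) \<in> Bb M" using Bb_add[OF YZ(1) Bb_sc[OF YZ(2)]] .
        have "L (\<lambda>\<omega>. Y \<omega> + -1 * Z \<omega>) \<le> R (\<lambda>\<omega>. Y \<omega> + -1 * Z \<omega>)" using L_R D by blast
        also have "\<dots> \<le> 0" by (rule R_ub[OF D]) (use YZ(3) in force)
        finally show ?thesis using L_diff[OF YZ(1,2)] by simp
      qed
      have Leq: "L Y = L Z" if YZ: "Y \<in> Bb M" "Z \<in> Bb M" "\<forall>\<omega>\<in>space M. Y \<omega> = Z \<omega>" for Y Z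
        using Lmono[OF YZ(1,2)] Lmono[OF YZ(2,1)] YZ(3) by force
      have Lconst: "L (\<lambda>\<omega>. c) = c" for c
      proof -
        have "L (\<lambda>\<omega>. c) \<le> c" using L_R Bb_const[of c M] R_const[of c] by force
        moreover have "L (\<lambda>\<omega>. -1 * c) \<le> -c" using L_R Bb_const[of "-1 * c" M] R_const[of "-1 * c"] by force
        moreover have "L (\<lambda>\<omega>. -1 * (\<lambda>\<omega>. c) \<omega>) = -1 * L (\<lambda>\<omega>. c)" by (rule L_sc[rule_format, OF Bb_const])
        ultimately show ?thesis by simp
      qed
      have Lub: "L Y \<le> b" if "Y \<in> Bb M" "\<forall>\<omega>\<in>space M. Y \<omega> \<le> b" for Y b
        using L_R that(1) R_ub[OF that] by force
      define P where "P A = (if A \<in> sets M then L (indicator A) else 0)" for A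
      have Pba: "P \<in> ba1 M"
        unfolding ba1_def
      proof (intro CollectI conjI ballI allI impI)
        fix A assume A: "A \<in> sets M"
        have "L (\<lambda>\<omega>. 0) \<le> L (indicator A)"
          by (rule Lmono[OF Bb_const Bb_indicator[OF A]]) auto
        then show "0 \<le> P A" using A Lconst[of 0] P_def by simp
      next
        have "L (indicator (space M)) = L (\<lambda>\<omega>. 1)"
          by (rule Leq[OF Bb_indicator[OF sets.top] Bb_const]) auto
        then show "P (space M) = 1" using Lconst[of 1] P_def by simp
      next
        fix A B assume A: "A \<in> sets M" and B: "B \<in> sets M" and AB: "A \<inter> B = {}"
        have e: "(indicator (A \<union> B) :: 'a \<Rightarrow> real) = (\<lambda>\<omega>. indicator A \<omega> + indicator B \<omega>)"
          using AB by (auto simp: indicator_def fun_eq_iff)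
        show "P (A \<union> B) = P A + P B"
          using A B L_add Bb_indicator[OF A] Bb_indicator[OF B] unfolding P_def e by auto
      next
        fix A assume "A \<notin> sets M" then show "P A = 0" unfolding P_def by simp
      qed
      have Psimple: "simple_int M P s = L s" if s: "simple_fn M s" for s
      proof -
        have sm: "s \<in> borel_measurable M" and fin: "finite (s ` space M)" using s unfolding simple_fn_def by auto
        define F where "F = s ` space M"
        define f where "f y = (\<lambda>\<omega>. y * indicator (s -` {y} \<inter> space M) \<omega>)" for y
        have Am: "s -` {y} \<inter> space M \<in> sets M" for y by (rule measurable_sets[OF sm]) auto
        have fB: "\<forall>y\<in>F. f y \<in> Bb M" unfolding f_def using Bb_sc[OF Bb_indicator[OF Am]] by blast
        have ls: "(\<lambda>\<omega>. \<Sum>y\<in>F. f y \<omega>) \<in> Bb M \<and> L (\<lambda>\<omega>. \<Sum>y\<in>F. f y \<omega>) = (\<Sum>y\<in>F. L (f y))"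
          by (rule lin_sum[OF Bb_add Bb_const L_add Lconst fin[folded F_def] fB])
        have "L s = L (\<lambda>\<omega>. \<Sum>y\<in>F. f y \<omega>)"
        proof (rule Leq[OF simple_Bb[OF s] conjunct1[OF ls]], intro ballI)
          fix \<omega> assume w: "\<omega> \<in> space M"
          have "(\<Sum>y\<in>F. f y \<omega>) = (\<Sum>y\<in>F. if y = s \<omega> then y else 0)"
            by (rule sum.cong) (use w in \<open>auto simp: f_def indicator_def\<close>)
          also have "\<dots> = s \<omega>" using w fin F_def by (simp add: sum.delta)
          finally show "s \<omega> = (\<Sum>y\<in>F. f y \<omega>)" by simp
        qed
        also have "\<dots> = (\<Sum>y\<in>F. L (f y))" using ls by simp
        also have "\<dots> = (\<Sum>y\<in>F. y * P (s -` {y} \<inter> space M))"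
        proof (rule sum.cong[OF refl])
          fix y assume "y \<in> F"
          show "L (f y) = y * P (s -` {y} \<inter> space M)"
            unfolding f_def P_def using Am[of y] L_sc Bb_indicator[OF Am[of y]] by simp
        qed
        finally show ?thesis unfolding simple_int_def F_def by simp
      qed
      have EP: "fa_expect M P Y = L Y" if Y: "Y \<in> Bb M" for Y
      proof -
        define T where "T = {simple_int M P s | s. simple_fn M s \<and> (\<forall>\<omega>\<in>space M. s \<omega> \<le> Y \<omega>)}"
        have Tne: "T \<noteq> {}" unfolding T_def by (rule T_ne[OF Y])
        have Tle: "t \<le> L Y" if "t \<in> T" for t
        proof -
          obtain s where "t = simple_int M P s" "simple_fn M s" "\<forall>\<omega>\<in>space M. s \<omega> \<le> Y \<omega>"
            using \<open>t \<in> T\<close> unfolding T_def by blast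
          then show ?thesis using Psimple Lmono[OF simple_Bb Y] by simp
        qed
        have Tbdd: "bdd_above T" using Tle unfolding bdd_above_def by blast
        have "Sup T \<le> L Y" using cSup_least[OF Tne] Tle by blast
        moreover have "L Y \<le> Sup T"
        proof (rule field_le_epsilon)
          fix e :: real assume e: "0 < e"
          have Ym: "Y \<in> borel_measurable M" using Y unfolding Bb_iff by blast
          obtain B where B: "\<forall>\<omega>\<in>space M. -B \<le> Y \<omega> \<and> Y \<omega> \<le> B" using Bbound[OF Y] by blast
          define s where "s = (\<lambda>\<omega>. e * real_of_int \<lfloor>Y \<omega> / e\<rfloor>)"
          have sm: "s \<in> borel_measurable M" unfolding s_def using Ym by measurable
          have "s ` space M \<subseteq> (\<lambda>k. e * real_of_int k) ` {\<lfloor>-B / e\<rfloor>..\<lfloor>B / e\<rfloor>}"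
          proof
            fix z assume "z \<in> s ` space M"
            then obtain \<omega> where w: "\<omega> \<in> space M" "z = s \<omega>" by blast
            have b1: "-B \<le> Y \<omega>" "Y \<omega> \<le> B" using B w by auto
            have "-B / e \<le> Y \<omega> / e" by (rule divide_right_mono[OF b1(1)]) (use e in simp)
            moreover have "Y \<omega> / e \<le> B / e" by (rule divide_right_mono[OF b1(2)]) (use e in simp)
            ultimately have "\<lfloor>Y \<omega> / e\<rfloor> \<in> {\<lfloor>-B / e\<rfloor>..\<lfloor>B / e\<rfloor>}" by (auto intro: floor_mono)
            then show "z \<in> (\<lambda>k. e * real_of_int k) ` {\<lfloor>-B / e\<rfloor>..\<lfloor>B / e\<rfloor>}" using w s_def by blast
          qed
          then have "finite (s ` space M)" by (rule finite_subset) simp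
          then have ss: "simple_fn M s" unfolding simple_fn_def using sm by simp
          have sle: "s \<omega> \<le> Y \<omega>" for \<omega>
          proof -
            have "e * real_of_int \<lfloor>Y \<omega> / e\<rfloor> \<le> e * (Y \<omega> / e)" using e by (intro mult_left_mono) auto
            then show ?thesis using e unfolding s_def by simp
          qed
          have sge: "Y \<omega> \<le> s \<omega> + e" for \<omega>
          proof -
            have "e * (Y \<omega> / e) \<le> e * (real_of_int \<lfloor>Y \<omega> / e\<rfloor> + 1)" using e by (intro mult_left_mono) auto
            then show ?thesis using e unfolding s_def by (simp add: algebra_simps)
          qed
          have sB: "s \<in> Bb M" using simple_Bb[OF ss] .
          have "L Y - L s = L (\<lambda>\<omega>. Y \<omega> + -1 * s \<omega>)" using L_diff[OF Y sB] by simp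
          also have "\<dots> \<le> e" by (rule Lub[OF Bb_add[OF Y Bb_sc[OF sB]]]) (use sge in \<open>auto simp: algebra_simps\<close>)
          finally have "L Y \<le> L s + e" by simp
          moreover have "L s \<le> Sup T"
            by (rule cSup_upper[OF _ Tbdd]) (use ss sle Psimple[OF ss] T_def in force)
          ultimately show "L Y \<le> Sup T + e" by simp
        qed
        ultimately show ?thesis unfolding fa_expect_def T_def[symmetric] by simp
      qed
      have "P \<in> \<P>"
        unfolding \<P>_def
      proof (intro CollectI conjI ballI Pba)
        fix Y assume YC: "Y \<in> C"
        then have YB: "Y \<in> Bb M" using C_sub by blast
        have "L Y \<le> R Y" using L_R YB by blast
        also have "R Y \<le> H Y" by (rule R_le[OF YB YC]) simp
        finally show "fa_expect M P Y \<le> H Y" using EP[OF YB] by simp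
      qed
      moreover have "R X = fa_expect M P X" using EP[OF X] L_X by simp
      ultimately show ?thesis by blast
    qed
  qed
  show ?thesis using coh part2 by blast
qed

end
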